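(* Let $M$ be a partial multiplication matrix and let $\mathcal{C}\subseteq\mathsf{Grid}(M)$ be a permutation class, with $\mathcal{C}^\#$ the set of $M$-gridded permutations whose underlying permutations lie in $\mathcal{C}$. Then the set of $M$-indivisible elements of $\mathcal{C}^\#$ is labelled well quasi-ordered if and only if $\mathcal{C}^\#$ is labelled well quasi-ordered. Furthermore, the same statement holds with "labelled well quasi-ordered" replaced by "well quasi-ordered" (under gridded containment).
   Context: Permutations are identified with their plots; a permutation class is a containment-closed set of permutations. A gridding matrix has entries in $\{0,1,-1\}$; an $m\times n$ one has $m$ columns, $n$ rows, $M_{ij}$ in column $i$ from the left and row $j$ from the bottom. An $M$-gridding of a permutation $\pi$ of length $L$ is a choice of vertical lines $\tfrac12=v_0\le\dots\le v_m=L+\tfrac12$ and horizontal lines $\tfrac12=h_0\le\dots\le h_n=L+\tfrac12$, not through points of $\pi$, such that in each cell $C_{ij}=\{v_{i-1}<x<v_i,\ h_{j-1}<y<h_j\}$ the points of $\pi$ are absent if $M_{ij}=0$, increasing if $M_{ij}=1$, decreasing if $M_{ij}=-1$; the result is an $M$-gridded permutation, and $\mathsf{Grid}(M)$ is the class of permutations with an $M$-gridding. Gridded containment: $\sigma^\#\le\pi^\#$ if some subsequence of $\pi$ order-isomorphic to $\sigma$ maps each point of $\sigma^\#$ to a point lying in the cell with the same index. $M$ is a partial multiplication matrix: there are fixed $c_1,\dots,c_m,r_1,\dots,r_n\in\{\pm1\}$ with $M_{ij}=c_ir_j$ for each non-zero entry. Column $i$ is oriented left-to-right if $c_i=1$,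 right-to-left otherwise; row $j$ bottom-to-top if $r_j=1$, top-to-bottom otherwise. $M$-sum: $\sigma^\#\boxplus\tau^\#$ is the $M$-gridded permutation whose points are those of $\sigma^\#$ and $\tau^\#$, each in its cell, with the relative order among points of $\sigma^\#$ and among points of $\tau^\#$ unchanged, and such that in every column (resp. row) of cells all points of $\sigma^\#$ precede all points of $\tau^\#$ in that column's (resp. row's) orientation. An $M$-gridded permutation is $M$-divisible if it equals $\sigma^\#\boxplus\tau^\#$ with both non-empty, and $M$-indivisible otherwise. A quasi-order is wqo if every infinite sequence $x_1,x_2,\dots$ has $i<j$ with $x_i\le x_j$. For a quasi-order $L$, an $L$-labelled gridded permutation is a gridded permutation with a map from its points to $L$; $(\sigma^\#,\ell_\sigma)\le(\pi^\#,\ell_\pi)$ if some gridded embedding maps each point to one whose label is $\ge$ its own. A set of gridded permutations is labelled well quasi-ordered if its set of $L$-labelled elements is wqo for every wqo $L$. *)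

theory Defs
  imports Main
begin

(* Permutations of length L are lists p that are permutations of [0..<L];
   the point at position x (0-based) has value p!x. *)
definition is_perm :: "nat list \<Rightarrow> bool" where
  "is_perm p \<longleftrightarrow> distinct p \<and> set p = {0..<length p}"

definition order_emb :: "(nat \<Rightarrow> nat) \<Rightarrow> nat list \<Rightarrow> nat list \<Rightarrow> bool" where
  "order_emb f q p \<longleftrightarrow>
     (\<forall>a<length q. f a < length p) \<and>
     (\<forall>a<length q. \<forall>b<length q. a < b \<longrightarrow> f a < f b) \<and>
     (\<forall>a<length q. \<forall>b<length q. q!a < q!b \<longleftrightarrow> p!(f a) < p!(f b))"

definition contained :: "nat list \<Rightarrow> nat list \<Rightarrow> bool" where
  "contained q p \<longleftrightarrow> (\<exists>f. order_emb f q p)"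

definition perm_class :: "nat list set \<Rightarrow> bool" where
  "perm_class C \<longleftrightarrow> (\<forall>p\<in>C. is_perm p) \<and>
     (\<forall>p\<in>C. \<forall>q. is_perm q \<and> contained q p \<longrightarrow> q \<in> C)"

(* m columns, n rows; M i j for column i (0-based, from the left), row j (0-based, from bottom) *)
definition gridding_matrix :: "nat \<Rightarrow> nat \<Rightarrow> (nat \<Rightarrow> nat \<Rightarrow> int) \<Rightarrow> bool" where
  "gridding_matrix m n M \<longleftrightarrow> (\<forall>i<m. \<forall>j<n. M i j \<in> {0, 1, -1})"

definition partial_mult_matrix ::
  "nat \<Rightarrow> nat \<Rightarrow> (nat \<Rightarrow> nat \<Rightarrow> int) \<Rightarrow> (nat \<Rightarrow> int) \<Rightarrow> (nat \<Rightarrow> int) \<Rightarrow> bool" where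
  "partial_mult_matrix m n M c r \<longleftrightarrow> gridding_matrix m n M \<and>
     (\<forall>i<m. c i \<in> {1, -1}) \<and> (\<forall>j<n. r j \<in> {1, -1}) \<and>
     (\<forall>i<m. \<forall>j<n. M i j \<noteq> 0 \<longrightarrow> M i j = c i * r j)"

(* A gridded permutation (p, cs, rs): cs = [c_0,...,c_m] are the column cuts:
   the vertical line v_i lies between positions c_i - 1 and c_i (i.e. v_i = c_i + 1/2
   in 1-based coordinates); similarly rs for the horizontal lines on values. *)
type_synonym gperm = "nat list \<times> nat list \<times> nat list"

definition glen :: "gperm \<Rightarrow> nat" where
  "glen g = length (fst g)"

fun in_col :: "gperm \<Rightarrow> nat \<Rightarrow> nat \<Rightarrow> bool" where
  "in_col (p, cs, rs) i x \<longleftrightarrow> cs!i \<le> x \<and> x < cs!Suc i"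

fun in_row :: "gperm \<Rightarrow> nat \<Rightarrow> nat \<Rightarrow> bool" where
  "in_row (p, cs, rs) j x \<longleftrightarrow> rs!j \<le> p!x \<and> p!x < rs!Suc j"

definition in_cell :: "gperm \<Rightarrow> nat \<Rightarrow> nat \<Rightarrow> nat \<Rightarrow> bool" where
  "in_cell g i j x \<longleftrightarrow> in_col g i x \<and> in_row g j x"

fun is_gridded :: "nat \<Rightarrow> nat \<Rightarrow> (nat \<Rightarrow> nat \<Rightarrow> int) \<Rightarrow> gperm \<Rightarrow> bool" where
  "is_gridded m n M (p, cs, rs) \<longleftrightarrow>
     is_perm p \<and> length cs = Suc m \<and> length rs = Suc n \<and> sorted cs \<and> sorted rs \<and>
     cs!0 = 0 \<and> cs!m = length p \<and> rs!0 = 0 \<and> rs!n = length p \<and>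
     (\<forall>i<m. \<forall>j<n. \<forall>x<length p. \<forall>y<length p.
        in_cell (p, cs, rs) i j x \<and> in_cell (p, cs, rs) i j y \<longrightarrow>
          M i j \<noteq> 0 \<and>
          (M i j = 1 \<and> x < y \<longrightarrow> p!x < p!y) \<and>
          (M i j = -1 \<and> x < y \<longrightarrow> p!x > p!y))"

definition Grid :: "nat \<Rightarrow> nat \<Rightarrow> (nat \<Rightarrow> nat \<Rightarrow> int) \<Rightarrow> nat list set" where
  "Grid m n M = {p. \<exists>cs rs. is_gridded m n M (p, cs, rs)}"

definition gridded_class :: "nat \<Rightarrow> nat \<Rightarrow> (nat \<Rightarrow> nat \<Rightarrow> int) \<Rightarrow> nat list set \<Rightarrow> gperm set" where
  "gridded_class m n M C = {g. is_gridded m n M g \<and> fst g \<in> C}"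

definition gemb :: "nat \<Rightarrow> nat \<Rightarrow> (nat \<Rightarrow> nat) \<Rightarrow> gperm \<Rightarrow> gperm \<Rightarrow> bool" where
  "gemb m n f \<sigma> \<pi> \<longleftrightarrow> order_emb f (fst \<sigma>) (fst \<pi>) \<and>
     (\<forall>a<glen \<sigma>. \<forall>i<m. \<forall>j<n. in_cell \<sigma> i j a \<longrightarrow> in_cell \<pi> i j (f a))"

definition gcontained :: "nat \<Rightarrow> nat \<Rightarrow> gperm \<Rightarrow> gperm \<Rightarrow> bool" where
  "gcontained m n \<sigma> \<pi> \<longleftrightarrow> (\<exists>f. gemb m n f \<sigma> \<pi>)"

definition msum :: "nat \<Rightarrow> nat \<Rightarrow> (nat \<Rightarrow> nat \<Rightarrow> int) \<Rightarrow> (nat \<Rightarrow> int) \<Rightarrow> (nat \<Rightarrow> int)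
    \<Rightarrow> gperm \<Rightarrow> gperm \<Rightarrow> gperm \<Rightarrow> bool" where
  "msum m n M c r \<sigma> \<tau> \<pi> \<longleftrightarrow>
     is_gridded m n M \<sigma> \<and> is_gridded m n M \<tau> \<and> is_gridded m n M \<pi> \<and>
     (\<exists>f g. gemb m n f \<sigma> \<pi> \<and> gemb m n g \<tau> \<pi> \<and>
        f ` {..<glen \<sigma>} \<inter> g ` {..<glen \<tau>} = {} \<and>
        f ` {..<glen \<sigma>} \<union> g ` {..<glen \<tau>} = {..<glen \<pi>} \<and>
        (\<forall>a<glen \<sigma>. \<forall>b<glen \<tau>.
           (\<forall>i<m. in_col \<pi> i (f a) \<and> in_col \<pi> i (g b) \<longrightarrow>
              (if c i = 1 then f a < g b else g b < f a)) \<and>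
           (\<forall>j<n. in_row \<pi> j (f a) \<and> in_row \<pi> j (g b) \<longrightarrow>
              (if r j = 1 then fst \<pi> ! (f a) < fst \<pi> ! (g b)
               else fst \<pi> ! (g b) < fst \<pi> ! (f a)))))"

definition m_divisible :: "nat \<Rightarrow> nat \<Rightarrow> (nat \<Rightarrow> nat \<Rightarrow> int) \<Rightarrow> (nat \<Rightarrow> int) \<Rightarrow> (nat \<Rightarrow> int)
    \<Rightarrow> gperm \<Rightarrow> bool" where
  "m_divisible m n M c r \<pi> \<longleftrightarrow>
     (\<exists>\<sigma> \<tau>. glen \<sigma> > 0 \<and> glen \<tau> > 0 \<and> msum m n M c r \<sigma> \<tau> \<pi>)"

definition wqo_on :: "('a \<Rightarrow> 'a \<Rightarrow> bool) \<Rightarrow> 'a set \<Rightarrow> bool" where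
  "wqo_on le A \<longleftrightarrow> (\<forall>x\<in>A. le x x) \<and>
     (\<forall>x\<in>A. \<forall>y\<in>A. \<forall>z\<in>A. le x y \<longrightarrow> le y z \<longrightarrow> le x z) \<and>
     (\<forall>f :: nat \<Rightarrow> 'a. (\<forall>i. f i \<in> A) \<longrightarrow> (\<exists>i j :: nat. i < j \<and> le (f i) (f j)))"

definition gwqo :: "nat \<Rightarrow> nat \<Rightarrow> gperm set \<Rightarrow> bool" where
  "gwqo m n S \<longleftrightarrow> wqo_on (gcontained m n) S"

(* L-labelled gridded permutations: labels as a list (label of the point at position x) *)
definition labelled_set :: "gperm set \<Rightarrow> 'l set \<Rightarrow> (gperm \<times> 'l list) set" where
  "labelled_set S A = {(g, ls). g \<in> S \<and> length ls = glen g \<and> set ls \<subseteq> A}"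

definition lcontained :: "nat \<Rightarrow> nat \<Rightarrow> ('l \<Rightarrow> 'l \<Rightarrow> bool)
    \<Rightarrow> gperm \<times> 'l list \<Rightarrow> gperm \<times> 'l list \<Rightarrow> bool" where
  "lcontained m n le x y \<longleftrightarrow>
     (\<exists>f. gemb m n f (fst x) (fst y) \<and> (\<forall>a<glen (fst x). le (snd x ! a) (snd y ! (f a))))"

(* labelled wqo, with labels ranging over every wqo L carried by a subset of type 'l *)
definition lwqo :: "'l itself \<Rightarrow> nat \<Rightarrow> nat \<Rightarrow> gperm set \<Rightarrow> bool" where
  "lwqo _ m n S \<longleftrightarrow> (\<forall>(A :: 'l set) le. wqo_on le A \<longrightarrow>
       wqo_on (lcontained m n le) (labelled_set S A))"

end

theory Submission
  imports Defs "HOL-Library.Infinite_Set"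
begin


lemma wqo_onD:
  fixes f :: "nat \<Rightarrow> 'a"
  assumes "wqo_on le A" "\<forall>i. f i \<in> A"
  shows "\<exists>i j. i < j \<and> le (f i) (f j)"
proof -
  have "\<forall>f::nat\<Rightarrow>'a. (\<forall>i. f i \<in> A) \<longrightarrow> (\<exists>i j. i < j \<and> le (f i) (f j))"
    using assms(1) unfolding wqo_on_def by (elim conjE) assumption
  then show ?thesis using assms(2) by (elim allE[of _ f]) (elim impE)
qed

lemma wqo_asc:
  fixes u :: "nat \<Rightarrow> 'a"
  assumes w: "wqo_on le B" and u: "\<forall>i. u i \<in> B"
  shows "\<exists>\<psi>::nat\<Rightarrow>nat. strict_mono \<psi> \<and> (\<forall>k l. k < l \<longrightarrow> le (u (\<psi> k)) (u (\<psi> l)))"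
proof -
  let ?T = "{i. \<forall>j>i. \<not> le (u i) (u j)}"
  have fin: "finite ?T"
  proof (rule ccontr)
    assume "infinite ?T"
    then obtain e :: "nat \<Rightarrow> nat" where e: "strict_mono e" "\<forall>k. e k \<in> ?T" using infinite_enumerate by blast
    then obtain i j where "i < j" "le (u (e i)) (u (e j))"
      using wqo_onD[OF w, of "\<lambda>k. u (e k)"] u by blast
    moreover have "e i < e j" using e(1) \<open>i<j\<close> by (simp add: strict_mono_less)
    ultimately show False using e(2) by blast
  qed
  then obtain N where N: "\<forall>i\<in>?T. i < N" using finite_nat_set_iff_bounded by blast
  have ex: "\<exists>j>i. le (u i) (u j)" if "i \<ge> N" for i
  proof -
    have "i \<notin> ?T" using N that by (meson not_less)
    then show ?thesis by simp
  qed
  define nxt where "nxt i = (SOME j. j > i \<and> le (u i) (u j))" for i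
  have nxt: "nxt i > i \<and> le (u i) (u (nxt i))" if "i \<ge> N" for i
    unfolding nxt_def using someI_ex[OF ex[OF that]] .
  define \<psi> where "\<psi> k = (nxt ^^ k) N" for k
  have suc: "\<psi> (Suc k) = nxt (\<psi> k)" for k by (simp add: \<psi>_def)
  have ge: "\<psi> k \<ge> N" for k
  proof (induction k)
    case 0 then show ?case by (simp add: \<psi>_def)
  next
    case (Suc k) then show ?case using nxt[OF Suc] suc[of k] by simp
  qed
  have sm: "strict_mono \<psi>" unfolding strict_mono_Suc_iff using nxt ge suc by auto
  have tr: "\<And>x y z. x\<in>B \<Longrightarrow> y\<in>B \<Longrightarrow> z\<in>B \<Longrightarrow> le x y \<Longrightarrow> le y z \<Longrightarrow> le x z"
    using w unfolding wqo_on_def by blast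
  have "le (u (\<psi> k)) (u (\<psi> (k + Suc d)))" for k d
  proof (induction d)
    case 0 then show ?case using nxt ge suc by simp
  next
    case (Suc d)
    have "le (u (\<psi> (k + Suc d))) (u (\<psi> (k + Suc (Suc d))))" using nxt[OF ge[of "k + Suc d"]] suc[of "k + Suc d"] by simp
    then show ?case using tr[OF u[rule_format] u[rule_format] u[rule_format] Suc] by simp
  qed
  then have "\<forall>k l. k < l \<longrightarrow> le (u (\<psi> k)) (u (\<psi> l))"
    by (metis less_imp_Suc_add add_Suc_right)
  with sm show ?thesis by blast
qed

lemma wqo_pair:
  fixes u v :: "nat \<Rightarrow> 'a"
  assumes w: "wqo_on le B" and u: "\<forall>i. u i \<in> B" and v: "\<forall>i. v i \<in> B"
  shows "\<exists>i j::nat. i < j \<and> le (u i) (u j) \<and> le (v i) (v j)"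
proof -
  obtain \<psi> :: "nat \<Rightarrow> nat" where p: "strict_mono \<psi>" "\<forall>k l. k < l \<longrightarrow> le (u (\<psi> k)) (u (\<psi> l))"
    using wqo_asc[OF w u] by blast
  have "\<forall>k. v (\<psi> k) \<in> B" using v by simp
  then obtain k l where "k < l" "le (v (\<psi> k)) (v (\<psi> l))"
    using wqo_onD[OF w, of "\<lambda>k. v (\<psi> k)"] by blast
  then show ?thesis using p by (metis strict_mono_less)
qed

definition bad :: "('a \<Rightarrow> 'a \<Rightarrow> bool) \<Rightarrow> 'a set \<Rightarrow> (nat \<Rightarrow> 'a) \<Rightarrow> bool" where
  "bad le S f \<longleftrightarrow> (\<forall>i. f i \<in> S) \<and> (\<forall>i j. i < j \<longrightarrow> \<not> le (f i) (f j))"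

definition ext_bad :: "('a \<Rightarrow> 'a \<Rightarrow> bool) \<Rightarrow> 'a set \<Rightarrow> 'a list \<Rightarrow> bool" where
  "ext_bad le S xs \<longleftrightarrow> (\<exists>f. bad le S f \<and> (\<forall>i<length xs. f i = xs ! i))"

lemma minimal_bad:
  fixes sz :: "'a \<Rightarrow> nat"
  assumes "bad le S f0"
  shows "\<exists>x. bad le S x \<and> (\<forall>k g. bad le S g \<and> (\<forall>i<k. g i = x i) \<longrightarrow> sz (x k) \<le> sz (g k))"
proof -
  define step where "step xs = (SOME y. ext_bad le S (xs @ [y]) \<and> (\<forall>z. ext_bad le S (xs @ [z]) \<longrightarrow> sz y \<le> sz z))" for xs
  have step: "ext_bad le S (xs @ [step xs]) \<and> (\<forall>z. ext_bad le S (xs @ [z]) \<longrightarrow> sz (step xs) \<le> sz z)"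
    if "ext_bad le S xs" for xs
  proof -
    from that obtain f where f: "bad le S f" "\<forall>i<length xs. f i = xs ! i" unfolding ext_bad_def by blast
    have "ext_bad le S (xs @ [f (length xs)])" unfolding ext_bad_def using f
      by (intro exI[of _ f]) (auto simp: nth_append less_Suc_eq)
    then have "\<exists>y. ext_bad le S (xs @ [y]) \<and> (\<forall>z. ext_bad le S (xs @ [z]) \<longrightarrow> sz y \<le> sz z)"
      by (rule ex_has_least_nat)
    then show ?thesis unfolding step_def by (rule someI_ex)
  qed
  define pre where "pre k = rec_nat [] (\<lambda>_ xs. xs @ [step xs]) k" for k
  have pre0: "pre 0 = []" and preS: "pre (Suc k) = pre k @ [step (pre k)]" for k
    by (simp_all add: pre_def)
  have len: "length (pre k) = k" for k by (induction k) (simp_all add: pre0 preS)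
  have ext_bad: "ext_bad le S (pre k)" for k
  proof (induction k)
    case 0 then show ?case using assms by (auto simp: pre0 ext_bad_def)
  next
    case (Suc k) then show ?case using step by (simp add: preS)
  qed
  have prefix: "pre (k + d) ! i = pre k ! i" if "i < k" for k d i
    using that by (induction d) (simp_all add: preS nth_append len)
  define x where "x i = pre (Suc i) ! i" for i
  have px: "pre k ! i = x i" if "i < k" for i k
    using prefix[of i "Suc i" "k - Suc i"] that by (simp add: x_def)
  have xbad: "bad le S x"
    unfolding bad_def
  proof (intro conjI allI impI)
    fix i
    obtain f where "bad le S f" "\<forall>j<length (pre (Suc i)). f j = pre (Suc i) ! j"
      using ext_bad[of "Suc i"] unfolding ext_bad_def by blast
    then show "x i \<in> S" using px[of i "Suc i"] len unfolding bad_def by (metis lessI)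
  next
    fix i j :: nat assume "i < j"
    obtain f where "bad le S f" "\<forall>l<length (pre (Suc j)). f l = pre (Suc j) ! l"
      using ext_bad[of "Suc j"] unfolding ext_bad_def by blast
    then show "\<not> le (x i) (x j)" using px[of i "Suc j"] px[of j "Suc j"] len \<open>i<j\<close>
      unfolding bad_def by (metis less_SucI lessI)
  qed
  have mn: "sz (x k) \<le> sz (g k)" if "bad le S g" "\<forall>i<k. g i = x i" for k g
  proof -
    have "ext_bad le S (pre k @ [g k])" unfolding ext_bad_def using that px len
      by (intro exI[of _ g]) (auto simp: nth_append less_Suc_eq)
    moreover have "x k = step (pre k)" using len by (simp add: x_def preS nth_append)
    ultimately show ?thesis using step[OF ext_bad[of k]] by simp
  qed
  have "\<forall>k g. bad le S g \<and> (\<forall>i<k. g i = x i) \<longrightarrow> sz (x k) \<le> sz (g k)"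
    using mn by auto
  with xbad show ?thesis by (intro exI[of _ x] conjI)
qed

lemma abstract_wqo:
  fixes sz :: "'a \<Rightarrow> nat"
  assumes refl: "\<forall>x\<in>S. le x x"
    and trans: "\<forall>x\<in>S. \<forall>y\<in>S. \<forall>z\<in>S. le x y \<longrightarrow> le y z \<longrightarrow> le x z"
    and IS: "I \<subseteq> S" and wI: "wqo_on le I"
    and decomp: "\<And>x. x \<in> S \<Longrightarrow> x \<notin> I \<Longrightarrow>
        \<exists>a b. a \<in> S \<and> b \<in> S \<and> sz a < sz x \<and> sz b < sz x \<and> sm a b x"
    and comp: "\<And>a b x. a \<in> S \<Longrightarrow> b \<in> S \<Longrightarrow> x \<in> S \<Longrightarrow> sm a b x \<Longrightarrow> le a x \<and> le b x"
    and mono: "\<And>a b x a' b' x'. a \<in> S \<Longrightarrow> b \<in> S \<Longrightarrow> x \<in> S \<Longrightarrow> a' \<in> S \<Longrightarrow> b' \<in> S \<Longrightarrow> x' \<in> S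
       \<Longrightarrow> sm a b x \<Longrightarrow> sm a' b' x' \<Longrightarrow> le a a' \<Longrightarrow> le b b' \<Longrightarrow> le x x'"
  shows "wqo_on le S"
proof (rule ccontr)
  assume nw: "\<not> wqo_on le S"
  have "\<not> (\<forall>f::nat\<Rightarrow>'a. (\<forall>i. f i \<in> S) \<longrightarrow> (\<exists>i j. i < j \<and> le (f i) (f j)))"
  proof
    assume H: "\<forall>f::nat\<Rightarrow>'a. (\<forall>i. f i \<in> S) \<longrightarrow> (\<exists>i j. i < j \<and> le (f i) (f j))"
    have "wqo_on le S" unfolding wqo_on_def using refl trans H by blast
    with nw show False by simp
  qed
  then obtain f0 where "bad le S f0" unfolding bad_def by auto
  from minimal_bad[OF this, of sz] obtain x where xb: "bad le S x"
    and xmin: "\<And>k g. bad le S g \<Longrightarrow> \<forall>i<k. g i = x i \<Longrightarrow> sz (x k) \<le> sz (g k)" by blast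
  have xS: "x i \<in> S" for i using xb by (simp add: bad_def)
  have xn: "i < j \<Longrightarrow> \<not> le (x i) (x j)" for i j using xb by (simp add: bad_def)
  let ?J = "{i. x i \<in> I}"
  have "finite ?J"
  proof (rule ccontr)
    assume "infinite ?J"
    then obtain e :: "nat \<Rightarrow> nat" where e: "strict_mono e" "\<forall>k. e k \<in> ?J" using infinite_enumerate by blast
    have "\<forall>k. x (e k) \<in> I" using e by simp
    then obtain i j where "i < j" "le (x (e i)) (x (e j))"
      using wqo_onD[OF wI, of "\<lambda>k. x (e k)"] by blast
    then show False using xn e(1) by (metis strict_mono_less)
  qed
  then obtain N where N: "\<forall>i\<in>?J. i < N" using finite_nat_set_iff_bounded by blast
  have "\<forall>i. \<exists>ab. N \<le> i \<longrightarrow> fst ab \<in> S \<and> snd ab \<in> S \<and> sz (fst ab) < sz (x i) \<and> sz (snd ab) < sz (x i)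
          \<and> sm (fst ab) (snd ab) (x i)"
  proof
    fix i
    show "\<exists>ab. N \<le> i \<longrightarrow> fst ab \<in> S \<and> snd ab \<in> S \<and> sz (fst ab) < sz (x i) \<and> sz (snd ab) < sz (x i)
          \<and> sm (fst ab) (snd ab) (x i)"
    proof (cases "N \<le> i")
      case True
      then have "x i \<notin> I" using N by force
      then obtain a b where "a \<in> S \<and> b \<in> S \<and> sz a < sz (x i) \<and> sz b < sz (x i) \<and> sm a b (x i)"
        using decomp[OF xS] by blast
      then show ?thesis by (intro exI[of _ "(a,b)"]) simp
    qed auto
  qed
  from choice[OF this] obtain F where F0: "\<forall>i. N \<le> i \<longrightarrow> fst (F i) \<in> S \<and> snd (F i) \<in> S \<and> sz (fst (F i)) < sz (x i)
     \<and> sz (snd (F i)) < sz (x i) \<and> sm (fst (F i)) (snd (F i)) (x i)" by blast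
  then have F: "\<And>i. N \<le> i \<Longrightarrow> fst (F i) \<in> S \<and> snd (F i) \<in> S \<and> sz (fst (F i)) < sz (x i)
     \<and> sz (snd (F i)) < sz (x i) \<and> sm (fst (F i)) (snd (F i)) (x i)" by blast
  define a where "a i = fst (F i)" for i
  define b where "b i = snd (F i)" for i
  define B where "B = {y. \<exists>i\<ge>N. y = a i \<or> y = b i}"
  have BS: "B \<subseteq> S" using F by (auto simp: B_def a_def b_def)
  have wB: "wqo_on le B"
  proof (rule ccontr)
    assume "\<not> wqo_on le B"
    moreover have "\<forall>x\<in>B. le x x" "\<forall>x\<in>B. \<forall>y\<in>B. \<forall>z\<in>B. le x y \<longrightarrow> le y z \<longrightarrow> le x z"
      using refl trans BS by blast+
    ultimately have "\<not> (\<forall>f::nat\<Rightarrow>'a. (\<forall>i. f i \<in> B) \<longrightarrow> (\<exists>i j. i < j \<and> le (f i) (f j)))"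
      unfolding wqo_on_def by blast
    then obtain y where yb: "bad le B y" unfolding bad_def by auto
    have "\<forall>k. \<exists>i. N \<le> i \<and> (y k = a i \<or> y k = b i)" using yb by (auto simp: bad_def B_def)
    from choice[OF this] obtain \<phi> where "\<forall>k. N \<le> \<phi> k \<and> (y k = a (\<phi> k) \<or> y k = b (\<phi> k))" by blast
    then have phi: "\<And>k. N \<le> \<phi> k \<and> (y k = a (\<phi> k) \<or> y k = b (\<phi> k))" by blast
    obtain k0 where k0: "\<forall>k. \<phi> k0 \<le> \<phi> k" using ex_has_least_nat[of "\<lambda>_. True" 0 \<phi>] by blast
    define p where "p = \<phi> k0"
    define g where "g i = (if i < p then x i else y (k0 + (i - p)))" for i
    have yS: "y k \<in> S" for k using yb BS by (auto simp: bad_def)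
    have yle: "le (y k) (x (\<phi> k))" for k
    proof -
      have "a (\<phi> k) \<in> S" "b (\<phi> k) \<in> S" "sm (a (\<phi> k)) (b (\<phi> k)) (x (\<phi> k))"
        using F[of "\<phi> k"] phi[of k] unfolding a_def b_def by auto
      then have "le (a (\<phi> k)) (x (\<phi> k)) \<and> le (b (\<phi> k)) (x (\<phi> k))" using comp xS by blast
      then show ?thesis using phi[of k] by auto
    qed
    have gb: "bad le S g" unfolding bad_def
    proof (intro conjI allI impI)
      fix i show "g i \<in> S" using xS yS by (simp add: g_def)
    next
      fix i j :: nat assume ij: "i < j"
      show "\<not> le (g i) (g j)"
      proof (cases "j < p")
        case True then show ?thesis using ij xn by (simp add: g_def)
      next
        case jp: False
        show ?thesis
        proof (cases "i < p")
          case True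
          let ?k = "k0 + (j - p)"
          have "i < \<phi> ?k" using True k0 p_def by (metis order_less_le_trans)
          show ?thesis
          proof
            assume "le (g i) (g j)"
            then have "le (x i) (y ?k)" using True jp by (simp add: g_def)
            then show False using trans xS[of i] yS[of ?k] xS[of "\<phi> ?k"] yle[of ?k] xn \<open>i < \<phi> ?k\<close> by blast
          qed
        next
          case False
          then show ?thesis using ij jp yb by (simp add: g_def bad_def)
        qed
      qed
    qed
    have "sz (x p) \<le> sz (g p)" using xmin[OF gb, of p] by (simp add: g_def)
    also have "\<dots> = sz (y k0)" by (simp add: g_def)
    also have "\<dots> < sz (x p)" using phi[of k0] F[of p] by (auto simp: p_def a_def b_def)
    finally show False by simp
  qed
  have "\<forall>k. a (N + k) \<in> B" "\<forall>k. b (N + k) \<in> B" unfolding B_def using le_add1 by blast+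
  from wqo_pair[OF wB this] obtain i j where ij: "i < j" "le (a (N+i)) (a (N+j))" "le (b (N+i)) (b (N+j))"
    by blast
  have "le (x (N+i)) (x (N+j))"
    using mono[of "a (N+i)" "b (N+i)" "x (N+i)" "a (N+j)" "b (N+j)" "x (N+j)"] F[of "N+i"] F[of "N+j"] ij xS
    by (simp add: a_def b_def)
  then show False using xn ij(1) by simp
qed




lemma col_exists:
  fixes cs :: "nat list" and x L :: nat
  assumes "sorted cs" "length cs = Suc m" "cs!0 = 0" "cs!m = L" "x < L"
  shows "\<exists>i<m. cs!i \<le> x \<and> x < cs!Suc i"
proof -
  have "\<forall>k\<le>m. x < cs!k \<longrightarrow> (\<exists>i<k. cs!i \<le> x \<and> x < cs!Suc i)"
  proof (intro allI)
    fix k show "k\<le>m \<longrightarrow> x < cs!k \<longrightarrow> (\<exists>i<k. cs!i \<le> x \<and> x < cs!Suc i)"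
    proof (induction k)
      case 0 then show ?case using assms by simp
    next
      case (Suc k)
      show ?case
      proof (intro impI)
        assume "Suc k \<le> m" "x < cs ! Suc k"
        show "\<exists>i<Suc k. cs!i \<le> x \<and> x < cs!Suc i"
        proof (cases "x < cs!k")
          case True then show ?thesis using Suc.IH \<open>Suc k \<le> m\<close> by (meson Suc_leD less_SucI)
        next
          case False then show ?thesis using \<open>x < cs ! Suc k\<close> by (intro exI[of _ k]) simp
        qed
      qed
    qed
  qed
  then show ?thesis using assms by blast
qed

lemma col_mono:
  assumes "sorted cs" "i2 < length cs" "i < i2" "x < cs!Suc i" "cs!i2 \<le> y"
  shows "x < y"
proof -
  have "cs!Suc i \<le> cs!i2" using assms by (intro sorted_nth_mono) auto
  then show ?thesis using assms by simp
qed

lemma cmp_lemma: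
  fixes x y x' y' :: nat
  assumes s: "sorted cs" "sorted cs'" "length cs = Suc m" "length cs' = Suc m" "i < m" "i2 < m"
    and a: "cs!i \<le> x" "x < cs!Suc i" "cs!i2 \<le> y" "y < cs!Suc i2"
    and b: "cs'!i \<le> x'" "x' < cs'!Suc i" "cs'!i2 \<le> y'" "y' < cs'!Suc i2"
    and eq: "i = i2 \<Longrightarrow> (x < y \<longleftrightarrow> x' < y')"
  shows "x < y \<longleftrightarrow> x' < y'"
proof (cases "i < i2")
  case True
  have "x < y" using col_mono[OF s(1) _ True a(2) a(3)] s(3,6) by simp
  moreover have "x' < y'" using col_mono[OF s(2) _ True b(2) b(3)] s(4,6) by simp
  ultimately show ?thesis by simp
next
  case False
  show ?thesis
  proof (cases "i2 < i")
    case True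
    have "y < x" using col_mono[OF s(1) _ True a(4) a(1)] s(3,5) by simp
    moreover have "y' < x'" using col_mono[OF s(2) _ True b(4) b(1)] s(4,5) by simp
    ultimately show ?thesis by simp
  next
    case False
    then show ?thesis using \<open>\<not> i < i2\<close> eq by simp
  qed
qed

lemma perm_val_less: "is_perm p \<Longrightarrow> x < length p \<Longrightarrow> p!x < length p"
proof -
  assume a: "is_perm p" "x < length p"
  have "p!x \<in> set p" using a(2) by (rule nth_mem)
  moreover have "set p = {0..<length p}" using a(1) unfolding is_perm_def by (elim conjE)
  ultimately show ?thesis by simp
qed

lemma perm_val_inj: "is_perm p \<Longrightarrow> x < length p \<Longrightarrow> y < length p \<Longrightarrow> x \<noteq> y \<Longrightarrow> p!x \<noteq> p!y"
proof -
  assume a: "is_perm p" "x < length p" "y < length p" "x \<noteq> y"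
  have "distinct p" using a(1) unfolding is_perm_def by (elim conjE)
  then show ?thesis using a(2-4) by (simp add: nth_eq_iff_index_eq)
qed

lemma cell_exists:
  assumes "is_gridded m n M g" "a < glen g"
  shows "\<exists>i<m. \<exists>j<n. in_cell g i j a"
proof -
  obtain p cs rs where g: "g = (p, cs, rs)" by (cases g)
  have G: "is_perm p" "length cs = Suc m" "length rs = Suc n" "sorted cs" "sorted rs"
     "cs!0 = 0" "cs!m = length p" "rs!0 = 0" "rs!n = length p"
    using assms(1) g by simp_all
  have al: "a < length p" using assms(2) g by (simp add: glen_def)
  obtain i where i: "i<m" "cs!i \<le> a \<and> a < cs!Suc i" using col_exists[OF G(4,2,6,7) al] by blast
  obtain j where j: "j<n" "rs!j \<le> p!a \<and> p!a < rs!Suc j"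
    using col_exists[OF G(5,3,8,9) perm_val_less[OF G(1) al]] by blast
  show ?thesis using i j g by (auto simp: in_cell_def)
qed

lemma cell_unique:
  assumes "is_gridded m n M g" "in_cell g i j a" "in_cell g i' j' a" "i<m" "i'<m" "j<n" "j'<n"
  shows "i = i' \<and> j = j'"
proof -
  obtain p cs rs where g: "g = (p, cs, rs)" by (cases g)
  have G: "length cs = Suc m" "length rs = Suc n" "sorted cs" "sorted rs"
    using assms(1) g by simp_all
  have c: "cs!i \<le> a" "a < cs!Suc i" "cs!i' \<le> a" "a < cs!Suc i'"
   and r: "rs!j \<le> p!a" "p!a < rs!Suc j" "rs!j' \<le> p!a" "p!a < rs!Suc j'"
    using assms(2,3) g by (auto simp: in_cell_def)
  have "i = i'"
  proof (rule ccontr)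
    assume "i \<noteq> i'"
    then have "i < i' \<or> i' < i" by auto
    then show False
    proof
      assume h: "i < i'" show False using col_mono[OF G(3) _ h c(2) c(3)] G(1) assms(5) by simp
    next
      assume h: "i' < i" show False using col_mono[OF G(3) _ h c(4) c(1)] G(1) assms(4) by simp
    qed
  qed
  moreover have "j = j'"
  proof (rule ccontr)
    assume "j \<noteq> j'"
    then have "j < j' \<or> j' < j" by auto
    then show False
    proof
      assume h: "j < j'" show False using col_mono[OF G(4) _ h r(2) r(3)] G(2) assms(7) by simp
    next
      assume h: "j' < j" show False using col_mono[OF G(4) _ h r(4) r(1)] G(2) assms(6) by simp
    qed
  qed
  ultimately show ?thesis by simp
qed

lemma order_emb_iff:
  assumes "order_emb f q p" "a < length q" "b < length q"
  shows "a < b \<longleftrightarrow> f a < f b"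
  using assms unfolding order_emb_def by (metis less_asym not_less_iff_gr_or_eq)

lemma gemb_id: "gemb m n id g g"
  unfolding gemb_def order_emb_def glen_def by simp

lemma gemb_comp:
  assumes "gemb m n f x y" "gemb m n h y z"
  shows "gemb m n (h \<circ> f) x z"
  using assms unfolding gemb_def order_emb_def glen_def by auto

lemma gemb_inj: "gemb m n f x y \<Longrightarrow> inj_on f {..<glen x}"
proof -
  assume "gemb m n f x y"
  then have oe: "order_emb f (fst x) (fst y)" unfolding gemb_def by blast
  show "inj_on f {..<glen x}"
  proof (rule inj_onI)
    fix a b assume "a \<in> {..<glen x}" "b \<in> {..<glen x}" "f a = f b"
    then show "a = b" using order_emb_iff[OF oe, of a b] order_emb_iff[OF oe, of b a]
      by (auto simp: glen_def)
  qed
qed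

definition msw :: "nat \<Rightarrow> nat \<Rightarrow> (nat \<Rightarrow> int) \<Rightarrow> (nat \<Rightarrow> int)
    \<Rightarrow> gperm \<Rightarrow> gperm \<Rightarrow> gperm \<Rightarrow> (nat \<Rightarrow> nat) \<Rightarrow> (nat \<Rightarrow> nat) \<Rightarrow> bool" where
  "msw m n c r \<sigma> \<tau> \<pi> f g \<longleftrightarrow> gemb m n f \<sigma> \<pi> \<and> gemb m n g \<tau> \<pi> \<and>
        f ` {..<glen \<sigma>} \<inter> g ` {..<glen \<tau>} = {} \<and>
        f ` {..<glen \<sigma>} \<union> g ` {..<glen \<tau>} = {..<glen \<pi>} \<and>
        (\<forall>a<glen \<sigma>. \<forall>b<glen \<tau>.
           (\<forall>i<m. in_col \<pi> i (f a) \<and> in_col \<pi> i (g b) \<longrightarrow>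
              (if c i = 1 then f a < g b else g b < f a)) \<and>
           (\<forall>j<n. in_row \<pi> j (f a) \<and> in_row \<pi> j (g b) \<longrightarrow>
              (if r j = 1 then fst \<pi> ! (f a) < fst \<pi> ! (g b)
               else fst \<pi> ! (g b) < fst \<pi> ! (f a))))"

lemma msum_iff: "msum m n M c r \<sigma> \<tau> \<pi> \<longleftrightarrow> is_gridded m n M \<sigma> \<and> is_gridded m n M \<tau> \<and>
   is_gridded m n M \<pi> \<and> (\<exists>f g. msw m n c r \<sigma> \<tau> \<pi> f g)"
  unfolding msum_def msw_def by (rule refl)

lemma msw_parts:
  assumes "msw m n c r \<sigma> \<tau> \<pi> f g"
  shows "gemb m n f \<sigma> \<pi>" "gemb m n g \<tau> \<pi>" "f ` {..<glen \<sigma>} \<inter> g ` {..<glen \<tau>} = {}"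
     "f ` {..<glen \<sigma>} \<union> g ` {..<glen \<tau>} = {..<glen \<pi>}"
  using assms unfolding msw_def by simp_all

lemma msw_size:
  assumes "msw m n c r \<sigma> \<tau> \<pi> f g"
  shows "glen \<sigma> + glen \<tau> = glen \<pi>"
proof -
  note P = msw_parts[OF assms]
  have i1: "inj_on f {..<glen \<sigma>}" "inj_on g {..<glen \<tau>}" using gemb_inj P(1,2) by blast+
  have "card (f ` {..<glen \<sigma>} \<union> g ` {..<glen \<tau>}) = card (f ` {..<glen \<sigma>}) + card (g ` {..<glen \<tau>})"
    using P(3) by (intro card_Un_disjoint) auto
  also have "\<dots> = glen \<sigma> + glen \<tau>" using i1 by (simp add: card_image)
  finally show ?thesis using P(4) by simp
qed

lemma gemb_cell:
  assumes "is_gridded m n M \<sigma>" "is_gridded m n M \<pi>" "gemb m n f \<sigma> \<pi>" "a < glen \<sigma>"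
    "in_cell \<pi> i j (f a)" "i < m" "j < n"
  shows "in_cell \<sigma> i j a"
proof -
  obtain i0 j0 where c: "i0<m" "j0<n" "in_cell \<sigma> i0 j0 a" using cell_exists[OF assms(1,4)] by blast
  then have "in_cell \<pi> i0 j0 (f a)" using assms(3,4) unfolding gemb_def by blast
  then have "i0 = i \<and> j0 = j" using cell_unique[OF assms(2)] c assms(5-7) by blast
  then show ?thesis using c by simp
qed

lemma gemb_lt: "gemb m n f \<sigma> \<pi> \<Longrightarrow> a < glen \<sigma> \<Longrightarrow> f a < glen \<pi>"
  unfolding gemb_def order_emb_def glen_def by blast




lemma msw_col:
  assumes "msw m n c r \<sigma> \<tau> \<pi> f g" "a < glen \<sigma>" "b < glen \<tau>" "i < m"
    "in_col \<pi> i (f a)" "in_col \<pi> i (g b)"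
  shows "f a < g b \<longleftrightarrow> c i = 1"
proof -
  have "\<forall>a<glen \<sigma>. \<forall>b<glen \<tau>.
           (\<forall>i<m. in_col \<pi> i (f a) \<and> in_col \<pi> i (g b) \<longrightarrow>
              (if c i = 1 then f a < g b else g b < f a))"
    using assms(1) unfolding msw_def by simp
  then have "if c i = 1 then f a < g b else g b < f a" using assms(2-6) by blast
  then show ?thesis by (cases "c i = 1") auto
qed

lemma msw_row:
  assumes "msw m n c r \<sigma> \<tau> \<pi> f g" "a < glen \<sigma>" "b < glen \<tau>" "j < n"
    "in_row \<pi> j (f a)" "in_row \<pi> j (g b)"
  shows "fst \<pi> ! (f a) < fst \<pi> ! (g b) \<longleftrightarrow> r j = 1"
proof -
  have "\<forall>a<glen \<sigma>. \<forall>b<glen \<tau>.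
           (\<forall>j<n. in_row \<pi> j (f a) \<and> in_row \<pi> j (g b) \<longrightarrow>
              (if r j = 1 then fst \<pi> ! (f a) < fst \<pi> ! (g b)
               else fst \<pi> ! (g b) < fst \<pi> ! (f a)))"
    using assms(1) unfolding msw_def by simp
  then have "if r j = 1 then fst \<pi> ! (f a) < fst \<pi> ! (g b) else fst \<pi> ! (g b) < fst \<pi> ! (f a)"
    using assms(2-6) by blast
  then show ?thesis by (cases "r j = 1") auto
qed

lemma cell_transfer:
  assumes "is_gridded m n M \<sigma>" "is_gridded m n M \<pi>"
    "gemb m n f \<sigma> \<pi>" "gemb m n h \<sigma> \<sigma>'" "gemb m n f' \<sigma>' \<pi>'" "a < glen \<sigma>"
    "in_cell \<pi> i j (f a)" "i < m" "j < n"
  shows "in_cell \<pi>' i j (f' (h a))"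
proof -
  have "in_cell \<sigma> i j a" using gemb_cell[OF assms(1,2,3,6,7,8,9)] .
  then have "in_cell \<sigma>' i j (h a)" using assms(4,6,8,9) unfolding gemb_def by blast
  moreover have "h a < glen \<sigma>'" using gemb_lt[OF assms(4,6)] .
  ultimately show ?thesis using assms(5,8,9) unfolding gemb_def by blast
qed

lemma same_side:
  assumes "gemb m n f \<sigma> \<pi>" "gemb m n h \<sigma> \<sigma>'" "gemb m n f' \<sigma>' \<pi>'" "a < glen \<sigma>" "a2 < glen \<sigma>"
  shows "(f a < f a2 \<longleftrightarrow> f' (h a) < f' (h a2)) \<and>
         (fst \<pi> ! (f a) < fst \<pi> ! (f a2) \<longleftrightarrow> fst \<pi>' ! (f' (h a)) < fst \<pi>' ! (f' (h a2)))"
proof -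
  have o1: "order_emb f (fst \<sigma>) (fst \<pi>)" and o2: "order_emb h (fst \<sigma>) (fst \<sigma>')"
    and o3: "order_emb f' (fst \<sigma>') (fst \<pi>')" using assms(1-3) unfolding gemb_def by simp_all
  have l: "a < length (fst \<sigma>)" "a2 < length (fst \<sigma>)" using assms(4,5) by (simp_all add: glen_def)
  have l2: "h a < length (fst \<sigma>')" "h a2 < length (fst \<sigma>')" using o2 l unfolding order_emb_def by blast+
  have "f a < f a2 \<longleftrightarrow> a < a2" using order_emb_iff[OF o1 l] by simp
  also have "\<dots> \<longleftrightarrow> h a < h a2" using order_emb_iff[OF o2 l] by simp
  also have "\<dots> \<longleftrightarrow> f' (h a) < f' (h a2)" using order_emb_iff[OF o3 l2] by simp
  finally have A: "f a < f a2 \<longleftrightarrow> f' (h a) < f' (h a2)" .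
  have v1: "\<forall>x<length (fst \<sigma>). \<forall>y<length (fst \<sigma>). fst \<sigma>!x < fst \<sigma>!y \<longleftrightarrow> fst \<pi>!(f x) < fst \<pi>!(f y)"
    using o1 unfolding order_emb_def by (elim conjE)
  have v2: "\<forall>x<length (fst \<sigma>). \<forall>y<length (fst \<sigma>). fst \<sigma>!x < fst \<sigma>!y \<longleftrightarrow> fst \<sigma>'!(h x) < fst \<sigma>'!(h y)"
    using o2 unfolding order_emb_def by (elim conjE)
  have v3: "\<forall>x<length (fst \<sigma>'). \<forall>y<length (fst \<sigma>'). fst \<sigma>'!x < fst \<sigma>'!y \<longleftrightarrow> fst \<pi>'!(f' x) < fst \<pi>'!(f' y)"
    using o3 unfolding order_emb_def by (elim conjE)
  have "fst \<pi> ! (f a) < fst \<pi> ! (f a2) \<longleftrightarrow> fst \<sigma>!a < fst \<sigma>!a2" using v1 l by simp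
  also have "\<dots> \<longleftrightarrow> fst \<sigma>'!(h a) < fst \<sigma>'!(h a2)" using v2 l by simp
  also have "\<dots> \<longleftrightarrow> fst \<pi>' ! (f' (h a)) < fst \<pi>' ! (f' (h a2))" using v3 l2 by simp
  finally show ?thesis using A by simp
qed




lemma mixed:
  assumes gs: "is_gridded m n M \<sigma>" "is_gridded m n M \<tau>" "is_gridded m n M \<pi>"
     "is_gridded m n M \<sigma>'" "is_gridded m n M \<tau>'" "is_gridded m n M \<pi>'"
  and w: "msw m n c r \<sigma> \<tau> \<pi> f g" and w': "msw m n c r \<sigma>' \<tau>' \<pi>' f' g'"
  and h1: "gemb m n h1 \<sigma> \<sigma>'" and h2: "gemb m n h2 \<tau> \<tau>'"
  and ab: "a < glen \<sigma>" "b < glen \<tau>"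
  shows "(f a < g b \<longleftrightarrow> f' (h1 a) < g' (h2 b)) \<and>
         (fst \<pi> ! (f a) < fst \<pi> ! (g b) \<longleftrightarrow> fst \<pi>' ! (f' (h1 a)) < fst \<pi>' ! (g' (h2 b)))"
proof -
  obtain p cs rs where pi: "\<pi> = (p, cs, rs)" by (cases \<pi>)
  obtain p' cs' rs' where pi': "\<pi>' = (p', cs', rs')" by (cases \<pi>')
  have G: "is_perm p" "length cs = Suc m" "length rs = Suc n" "sorted cs" "sorted rs"
    using gs(3) pi by simp_all
  have G': "is_perm p'" "length cs' = Suc m" "length rs' = Suc n" "sorted cs'" "sorted rs'"
    using gs(6) pi' by simp_all
  note P = msw_parts[OF w] and P' = msw_parts[OF w']
  have fa: "f a < glen \<pi>" using gemb_lt[OF P(1) ab(1)] .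
  have gb: "g b < glen \<pi>" using gemb_lt[OF P(2) ab(2)] .
  have a': "h1 a < glen \<sigma>'" using gemb_lt[OF h1 ab(1)] .
  have b': "h2 b < glen \<tau>'" using gemb_lt[OF h2 ab(2)] .
  obtain i j where ij: "i<m" "j<n" "in_cell \<pi> i j (f a)" using cell_exists[OF gs(3) fa] by blast
  obtain i2 j2 where ij2: "i2<m" "j2<n" "in_cell \<pi> i2 j2 (g b)" using cell_exists[OF gs(3) gb] by blast
  have c1: "in_cell \<pi>' i j (f' (h1 a))"
    using cell_transfer[OF gs(1,3) P(1) h1 P'(1) ab(1) ij(3) ij(1,2)] .
  have c2: "in_cell \<pi>' i2 j2 (g' (h2 b))"
    using cell_transfer[OF gs(2,3) P(2) h2 P'(2) ab(2) ij2(3) ij2(1,2)] .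
  have X: "cs!i \<le> f a" "f a < cs!Suc i" "rs!j \<le> p!(f a)" "p!(f a) < rs!Suc j"
    using ij(3) pi by (simp_all add: in_cell_def)
  have Y: "cs!i2 \<le> g b" "g b < cs!Suc i2" "rs!j2 \<le> p!(g b)" "p!(g b) < rs!Suc j2"
    using ij2(3) pi by (simp_all add: in_cell_def)
  have X': "cs'!i \<le> f' (h1 a)" "f' (h1 a) < cs'!Suc i" "rs'!j \<le> p'!(f' (h1 a))" "p'!(f' (h1 a)) < rs'!Suc j"
    using c1 pi' by (simp_all add: in_cell_def)
  have Y': "cs'!i2 \<le> g' (h2 b)" "g' (h2 b) < cs'!Suc i2" "rs'!j2 \<le> p'!(g' (h2 b))" "p'!(g' (h2 b)) < rs'!Suc j2"
    using c2 pi' by (simp_all add: in_cell_def)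
  have eq1: "f a < g b \<longleftrightarrow> f' (h1 a) < g' (h2 b)" if "i = i2"
  proof -
    have "f a < g b \<longleftrightarrow> c i = 1"
      using msw_col[OF w ab(1) ab(2) ij(1)] ij(3) ij2(3) that unfolding in_cell_def by blast
    moreover have "f' (h1 a) < g' (h2 b) \<longleftrightarrow> c i = 1"
      using msw_col[OF w' a' b' ij(1)] c1 c2 that unfolding in_cell_def by blast
    ultimately show ?thesis by simp
  qed
  have eq2: "p!(f a) < p!(g b) \<longleftrightarrow> p'!(f' (h1 a)) < p'!(g' (h2 b))" if "j = j2"
  proof -
    have "fst \<pi> ! (f a) < fst \<pi> ! (g b) \<longleftrightarrow> r j = 1"
      using msw_row[OF w ab(1) ab(2) ij(2)] ij(3) ij2(3) that unfolding in_cell_def by blast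
    moreover have "fst \<pi>' ! (f' (h1 a)) < fst \<pi>' ! (g' (h2 b)) \<longleftrightarrow> r j = 1"
      using msw_row[OF w' a' b' ij(2)] c1 c2 that unfolding in_cell_def by blast
    ultimately show ?thesis using pi pi' by simp
  qed
  have R1: "f a < g b \<longleftrightarrow> f' (h1 a) < g' (h2 b)"
    by (rule cmp_lemma[OF G(4) G'(4) G(2) G'(2) ij(1) ij2(1) X(1,2) Y(1,2) X'(1,2) Y'(1,2) eq1])
  have R2: "p!(f a) < p!(g b) \<longleftrightarrow> p'!(f' (h1 a)) < p'!(g' (h2 b))"
    by (rule cmp_lemma[OF G(5) G'(5) G(3) G'(3) ij(2) ij2(2) X(3,4) Y(3,4) X'(3,4) Y'(3,4) eq2])
  show ?thesis using R1 R2 pi pi' by simp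
qed




lemma msw_mono:
  assumes gs: "is_gridded m n M \<sigma>" "is_gridded m n M \<tau>" "is_gridded m n M \<pi>"
     "is_gridded m n M \<sigma>'" "is_gridded m n M \<tau>'" "is_gridded m n M \<pi>'"
  and w: "msw m n c r \<sigma> \<tau> \<pi> f g" and w': "msw m n c r \<sigma>' \<tau>' \<pi>' f' g'"
  and h1: "gemb m n h1 \<sigma> \<sigma>'" and h2: "gemb m n h2 \<tau> \<tau>'"
  shows "\<exists>H. gemb m n H \<pi> \<pi>' \<and> (\<forall>a<glen \<sigma>. H (f a) = f' (h1 a)) \<and> (\<forall>b<glen \<tau>. H (g b) = g' (h2 b))"
proof -
  note P = msw_parts[OF w] and P' = msw_parts[OF w']
  have injf: "inj_on f {..<glen \<sigma>}" using gemb_inj[OF P(1)] .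
  have injg: "inj_on g {..<glen \<tau>}" using gemb_inj[OF P(2)] .
  define H where "H u = (if u \<in> f ` {..<glen \<sigma>} then f' (h1 (the_inv_into {..<glen \<sigma>} f u))
                         else g' (h2 (the_inv_into {..<glen \<tau>} g u)))" for u
  have Hf: "H (f a) = f' (h1 a)" if "a < glen \<sigma>" for a
    using that injf by (simp add: H_def the_inv_into_f_f)
  have Hg: "H (g b) = g' (h2 b)" if "b < glen \<tau>" for b
  proof -
    have "g b \<notin> f ` {..<glen \<sigma>}" using P(3) that by blast
    then show ?thesis using that injg by (simp add: H_def the_inv_into_f_f)
  qed
  have cover: "(\<exists>a<glen \<sigma>. u = f a) \<or> (\<exists>b<glen \<tau>. u = g b)" if "u < glen \<pi>" for u
  proof -
    have "u \<in> f ` {..<glen \<sigma>} \<union> g ` {..<glen \<tau>}" using P(4) that by simp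
    then show ?thesis by auto
  qed
  have disj: "f a \<noteq> g b" if "a < glen \<sigma>" "b < glen \<tau>" for a b
    using P(3) that by blast
  have disj': "f' a \<noteq> g' b" if "a < glen \<sigma>'" "b < glen \<tau>'" for a b
    using P'(3) that by blast
  have a': "h1 a < glen \<sigma>'" if "a < glen \<sigma>" for a using gemb_lt[OF h1 that] .
  have b': "h2 b < glen \<tau>'" if "b < glen \<tau>" for b using gemb_lt[OF h2 that] .
  have Hlt: "H u < glen \<pi>'" if "u < glen \<pi>" for u
    using cover[OF that] Hf Hg gemb_lt[OF P'(1)] gemb_lt[OF P'(2)] a' b' by auto
  have permp: "is_perm (fst \<pi>)" using gs(3) by (cases \<pi>) simp
  have permp': "is_perm (fst \<pi>')" using gs(6) by (cases \<pi>') simp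
  have vinj: "fst \<pi> ! u \<noteq> fst \<pi> ! v" if "u < glen \<pi>" "v < glen \<pi>" "u \<noteq> v" for u v
    using perm_val_inj[OF permp] that by (simp add: glen_def)
  have vinj': "fst \<pi>' ! u \<noteq> fst \<pi>' ! v" if "u < glen \<pi>'" "v < glen \<pi>'" "u \<noteq> v" for u v
    using perm_val_inj[OF permp'] that by (simp add: glen_def)
  have key: "(u < v \<longleftrightarrow> H u < H v) \<and> (fst \<pi> ! u < fst \<pi> ! v \<longleftrightarrow> fst \<pi>' ! (H u) < fst \<pi>' ! (H v))"
    if uv: "u < glen \<pi>" "v < glen \<pi>" for u v
  proof -
    consider (ff) a a2 where "a < glen \<sigma>" "a2 < glen \<sigma>" "u = f a" "v = f a2"
      | (fg) a b where "a < glen \<sigma>" "b < glen \<tau>" "u = f a" "v = g b"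
      | (gf) a b where "a < glen \<sigma>" "b < glen \<tau>" "u = g b" "v = f a"
      | (gg) b b2 where "b < glen \<tau>" "b2 < glen \<tau>" "u = g b" "v = g b2"
      using cover[OF uv(1)] cover[OF uv(2)] by blast
    then show ?thesis
    proof cases
      case ff then show ?thesis using same_side[OF P(1) h1 P'(1), of a a2] Hf by simp
    next
      case gg then show ?thesis using same_side[OF P(2) h2 P'(2), of b b2] Hg by simp
    next
      case fg then show ?thesis using mixed[OF gs w w' h1 h2, of a b] Hf Hg by simp
    next
      case gf
      have M: "(f a < g b \<longleftrightarrow> f' (h1 a) < g' (h2 b)) \<and>
         (fst \<pi> ! (f a) < fst \<pi> ! (g b) \<longleftrightarrow> fst \<pi>' ! (f' (h1 a)) < fst \<pi>' ! (g' (h2 b)))"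
        using mixed[OF gs w w' h1 h2, of a b] gf by simp
      have d1: "f a \<noteq> g b" using disj gf by simp
      have d2: "f' (h1 a) \<noteq> g' (h2 b)" using disj' a' b' gf by simp
      have l1: "f a < glen \<pi>" "g b < glen \<pi>" using gemb_lt[OF P(1)] gemb_lt[OF P(2)] gf by simp_all
      have l2: "f' (h1 a) < glen \<pi>'" "g' (h2 b) < glen \<pi>'"
        using gemb_lt[OF P'(1)] gemb_lt[OF P'(2)] a' b' gf by simp_all
      have d3: "fst \<pi> ! (f a) \<noteq> fst \<pi> ! (g b)" using vinj l1 d1 by simp
      have d4: "fst \<pi>' ! (f' (h1 a)) \<noteq> fst \<pi>' ! (g' (h2 b))" using vinj' l2 d2 by simp
      have "g b < f a \<longleftrightarrow> g' (h2 b) < f' (h1 a)" using M d1 d2 by auto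
      moreover have "fst \<pi> ! (g b) < fst \<pi> ! (f a) \<longleftrightarrow> fst \<pi>' ! (g' (h2 b)) < fst \<pi>' ! (f' (h1 a))"
        using M d3 d4 by auto
      ultimately show ?thesis using gf Hf Hg by simp
    qed
  qed
  have oe: "order_emb H (fst \<pi>) (fst \<pi>')"
    unfolding order_emb_def using Hlt key by (simp add: glen_def)
  have cells: "in_cell \<pi>' i j (H u)" if us: "u < glen \<pi>" "i < m" "j < n" "in_cell \<pi> i j u" for u i j
  proof -
    consider (f) a where "a < glen \<sigma>" "u = f a" | (g) b where "b < glen \<tau>" "u = g b"
      using cover[OF us(1)] by blast
    then show ?thesis
    proof cases
      case f then show ?thesis using cell_transfer[OF gs(1,3) P(1) h1 P'(1), of a i j] us Hf by simp
    next
      case g then show ?thesis using cell_transfer[OF gs(2,3) P(2) h2 P'(2), of b i j] us Hg by simp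
    qed
  qed
  have "gemb m n H \<pi> \<pi>'" unfolding gemb_def using oe cells by blast
  then show ?thesis using Hf Hg by blast
qed




lemma wqo_on_subset:
  fixes le :: "'a \<Rightarrow> 'a \<Rightarrow> bool"
  assumes "wqo_on le S" "T \<subseteq> S"
  shows "wqo_on le T"
proof -
  have rt: "(\<forall>x\<in>S. le x x) \<and> (\<forall>x\<in>S. \<forall>y\<in>S. \<forall>z\<in>S. le x y \<longrightarrow> le y z \<longrightarrow> le x z)
     \<and> (\<forall>f::nat\<Rightarrow>'a. (\<forall>i. f i \<in> S) \<longrightarrow> (\<exists>i j. i < j \<and> le (f i) (f j)))"
    using assms(1) unfolding wqo_on_def .
  have r: "\<forall>x\<in>S. le x x" using rt by (rule conjunct1)
  have t: "\<forall>x\<in>S. \<forall>y\<in>S. \<forall>z\<in>S. le x y \<longrightarrow> le y z \<longrightarrow> le x z"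
    using rt by (elim conjE)
  have s: "\<exists>i j. i < j \<and> le (f i) (f j)" if "\<forall>i. f i \<in> T" for f :: "nat \<Rightarrow> 'a"
  proof -
    have "\<forall>i. f i \<in> S" using that assms(2) by blast
    then show ?thesis by (rule wqo_onD[OF assms(1)])
  qed
  show ?thesis unfolding wqo_on_def
  proof (intro conjI)
    show "\<forall>x\<in>T. le x x" using r assms(2) by blast
    show "\<forall>x\<in>T. \<forall>y\<in>T. \<forall>z\<in>T. le x y \<longrightarrow> le y z \<longrightarrow> le x z" using t assms(2) by blast
    show "\<forall>f::nat\<Rightarrow>'a. (\<forall>i. f i \<in> T) \<longrightarrow> (\<exists>i j. i < j \<and> le (f i) (f j))"
    proof (intro allI impI)
      fix f :: "nat \<Rightarrow> 'a" assume "\<forall>i. f i \<in> T" then show "\<exists>i j. i < j \<and> le (f i) (f j)" by (rule s)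
    qed
  qed
qed

lemma msw_cover:
  assumes "msw m n c r \<sigma> \<tau> \<pi> f g" "u < glen \<pi>"
  shows "(\<exists>a<glen \<sigma>. u = f a) \<or> (\<exists>b<glen \<tau>. u = g b)"
proof -
  have "u \<in> f ` {..<glen \<sigma>} \<union> g ` {..<glen \<tau>}" using msw_parts(4)[OF assms(1)] assms(2) by simp
  then show ?thesis by auto
qed

lemma comp_in_class:
  assumes "perm_class C" "\<pi> \<in> gridded_class m n M C" "is_gridded m n M \<sigma>" "gemb m n f \<sigma> \<pi>"
  shows "\<sigma> \<in> gridded_class m n M C"
proof -
  have pc: "\<forall>p\<in>C. \<forall>q. is_perm q \<and> contained q p \<longrightarrow> q \<in> C" using assms(1) unfolding perm_class_def by (rule conjunct2)
  have "is_perm (fst \<sigma>)" using assms(3) by (cases \<sigma>) simp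
  moreover have "contained (fst \<sigma>) (fst \<pi>)" using assms(4) unfolding gemb_def contained_def by blast
  moreover have "fst \<pi> \<in> C" using assms(2) unfolding gridded_class_def by simp
  ultimately have "fst \<sigma> \<in> C" using pc by blast
  then show ?thesis using assms(3) unfolding gridded_class_def by simp
qed

lemma gwqo_part:
  assumes pc: "perm_class C"
    and wI: "gwqo m n {g \<in> gridded_class m n M C. \<not> m_divisible m n M c r g}"
  shows "gwqo m n (gridded_class m n M C)"
  unfolding gwqo_def
proof (rule abstract_wqo[where I = "{g \<in> gridded_class m n M C. \<not> m_divisible m n M c r g}"
      and sz = glen and sm = "msum m n M c r"])
  let ?S = "gridded_class m n M C"
  show "\<forall>x\<in>?S. gcontained m n x x" unfolding gcontained_def using gemb_id by (intro ballI exI)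
  show "\<forall>x\<in>?S. \<forall>y\<in>?S. \<forall>z\<in>?S. gcontained m n x y \<longrightarrow> gcontained m n y z \<longrightarrow> gcontained m n x z"
  proof (intro ballI impI)
    fix x y z assume "gcontained m n x y" "gcontained m n y z"
    then obtain f1 f2 where "gemb m n f1 x y" "gemb m n f2 y z" unfolding gcontained_def by blast
    then have "gemb m n (f2 \<circ> f1) x z" by (rule gemb_comp)
    then show "gcontained m n x z" unfolding gcontained_def by blast
  qed
  show "{g \<in> ?S. \<not> m_divisible m n M c r g} \<subseteq> ?S" by blast
  show "wqo_on (gcontained m n) {g \<in> ?S. \<not> m_divisible m n M c r g}" using wI unfolding gwqo_def .
next
  fix x assume xS: "x \<in> gridded_class m n M C" and xI: "x \<notin> {g \<in> gridded_class m n M C. \<not> m_divisible m n M c r g}"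
  then have "m_divisible m n M c r x" by blast
  then obtain \<sigma> \<tau> where st: "glen \<sigma> > 0" "glen \<tau> > 0" "msum m n M c r \<sigma> \<tau> x"
    unfolding m_divisible_def by blast
  then obtain f g where G: "is_gridded m n M \<sigma>" "is_gridded m n M \<tau>" "msw m n c r \<sigma> \<tau> x f g"
    unfolding msum_iff by blast
  have "glen \<sigma> + glen \<tau> = glen x" using msw_size[OF G(3)] .
  moreover have "\<sigma> \<in> gridded_class m n M C" using comp_in_class[OF pc xS G(1) msw_parts(1)[OF G(3)]] .
  moreover have "\<tau> \<in> gridded_class m n M C" using comp_in_class[OF pc xS G(2) msw_parts(2)[OF G(3)]] .
  ultimately show "\<exists>a b. a \<in> gridded_class m n M C \<and> b \<in> gridded_class m n M C \<and> glen a < glen x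
     \<and> glen b < glen x \<and> msum m n M c r a b x" using st by (intro exI[of _ \<sigma>] exI[of _ \<tau>]) simp
next
  fix a b x assume "msum m n M c r a b x"
  then obtain f g where "msw m n c r a b x f g" unfolding msum_iff by blast
  then show "gcontained m n a x \<and> gcontained m n b x"
    unfolding gcontained_def using msw_parts(1,2) by blast
next
  fix a b x a' b' x'
  assume s: "msum m n M c r a b x" "msum m n M c r a' b' x'" and l: "gcontained m n a a'" "gcontained m n b b'"
  obtain f g where w: "msw m n c r a b x f g" and ga: "is_gridded m n M a" "is_gridded m n M b" "is_gridded m n M x"
    using s(1) unfolding msum_iff by blast
  obtain f' g' where w': "msw m n c r a' b' x' f' g'" and ga': "is_gridded m n M a'" "is_gridded m n M b'" "is_gridded m n M x'"
    using s(2) unfolding msum_iff by blast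
  obtain h1 h2 where h: "gemb m n h1 a a'" "gemb m n h2 b b'" using l unfolding gcontained_def by blast
  show "gcontained m n x x'" unfolding gcontained_def using msw_mono[OF ga ga' w w' h] by blast
qed




definition lsm :: "nat \<Rightarrow> nat \<Rightarrow> (nat \<Rightarrow> nat \<Rightarrow> int) \<Rightarrow> (nat \<Rightarrow> int) \<Rightarrow> (nat \<Rightarrow> int)
   \<Rightarrow> gperm \<times> 'l list \<Rightarrow> gperm \<times> 'l list \<Rightarrow> gperm \<times> 'l list \<Rightarrow> bool" where
  "lsm m n M c r x y z \<longleftrightarrow> (\<exists>f g. is_gridded m n M (fst x) \<and> is_gridded m n M (fst y) \<and>
     is_gridded m n M (fst z) \<and> msw m n c r (fst x) (fst y) (fst z) f g \<and>
     (\<forall>a<glen (fst x). snd x ! a = snd z ! (f a)) \<and> (\<forall>b<glen (fst y). snd y ! b = snd z ! (g b)))"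

lemma lwqo_part:
  fixes A :: "'l set" and le :: "'l \<Rightarrow> 'l \<Rightarrow> bool"
  assumes pc: "perm_class C" and wA: "wqo_on le A"
    and wI: "wqo_on (lcontained m n le) (labelled_set {g \<in> gridded_class m n M C. \<not> m_divisible m n M c r g} A)"
  shows "wqo_on (lcontained m n le) (labelled_set (gridded_class m n M C) A)"
proof -
  have rt: "(\<forall>x\<in>A. le x x) \<and> (\<forall>x\<in>A. \<forall>y\<in>A. \<forall>z\<in>A. le x y \<longrightarrow> le y z \<longrightarrow> le x z)
     \<and> (\<forall>f::nat\<Rightarrow>'l. (\<forall>i. f i \<in> A) \<longrightarrow> (\<exists>i j. i < j \<and> le (f i) (f j)))"
    using wA unfolding wqo_on_def .
  have r0: "\<forall>x\<in>A. le x x" using rt by (rule conjunct1)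
  have rA: "\<And>x. x \<in> A \<Longrightarrow> le x x" using r0 by (rule bspec)
  have tA: "\<And>x y z. x \<in> A \<Longrightarrow> y \<in> A \<Longrightarrow> z \<in> A \<Longrightarrow> le x y \<Longrightarrow> le y z \<Longrightarrow> le x z"
  proof -
    fix x y z assume xyz: "x \<in> A" "y \<in> A" "z \<in> A" "le x y" "le y z"
    have T: "\<forall>x\<in>A. \<forall>y\<in>A. \<forall>z\<in>A. le x y \<longrightarrow> le y z \<longrightarrow> le x z" using rt by (elim conjE)
    show "le x z" using T[rule_format, OF xyz(1,2,3,4,5)] .
  qed
  let ?S = "labelled_set (gridded_class m n M C) A"
  let ?I = "labelled_set {g \<in> gridded_class m n M C. \<not> m_divisible m n M c r g} A"
  have lab: "snd x ! a \<in> A" if "x \<in> ?S" "a < glen (fst x)" for x a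
  proof -
    obtain g ls where x: "x = (g, ls)" by (cases x)
    have "length ls = glen g" "set ls \<subseteq> A" using that(1) x unfolding labelled_set_def by simp_all
    moreover have "ls ! a \<in> set ls" using that(2) x \<open>length ls = glen g\<close> by simp
    ultimately show ?thesis using x by (simp add: subset_iff)
  qed
  show ?thesis
  proof (rule abstract_wqo[where I = ?I and sz = "\<lambda>x. glen (fst x)" and sm = "lsm m n M c r"])
    show "\<forall>x\<in>?S. lcontained m n le x x"
    proof
      fix x assume x: "x \<in> ?S"
      have "gemb m n id (fst x) (fst x)" by (rule gemb_id)
      moreover have "\<forall>a<glen (fst x). le (snd x ! a) (snd x ! id a)" using lab[OF x] rA by simp
      ultimately show "lcontained m n le x x" unfolding lcontained_def by blast
    qed
    show "\<forall>x\<in>?S. \<forall>y\<in>?S. \<forall>z\<in>?S. lcontained m n le x y \<longrightarrow> lcontained m n le y z \<longrightarrow> lcontained m n le x z"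
    proof (intro ballI impI)
      fix x y z assume xyz: "x \<in> ?S" "y \<in> ?S" "z \<in> ?S" "lcontained m n le x y" "lcontained m n le y z"
      then obtain f1 f2 where f: "gemb m n f1 (fst x) (fst y)" "\<forall>a<glen (fst x). le (snd x ! a) (snd y ! (f1 a))"
        "gemb m n f2 (fst y) (fst z)" "\<forall>a<glen (fst y). le (snd y ! a) (snd z ! (f2 a))"
        unfolding lcontained_def by blast
      have "gemb m n (f2 \<circ> f1) (fst x) (fst z)" using f(1,3) by (rule gemb_comp)
      moreover have "\<forall>a<glen (fst x). le (snd x ! a) (snd z ! ((f2 \<circ> f1) a))"
      proof (intro allI impI)
        fix a assume a: "a < glen (fst x)"
        have fa: "f1 a < glen (fst y)" using gemb_lt[OF f(1) a] .
        have ffa: "f2 (f1 a) < glen (fst z)" using gemb_lt[OF f(3) fa] .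
        show "le (snd x ! a) (snd z ! ((f2 \<circ> f1) a))"
          using tA[OF lab[OF xyz(1) a] lab[OF xyz(2) fa] lab[OF xyz(3) ffa]] f(2) f(4) a fa by simp
      qed
      ultimately show "lcontained m n le x z" unfolding lcontained_def by blast
    qed
    show "?I \<subseteq> ?S" unfolding labelled_set_def by blast
    show "wqo_on (lcontained m n le) ?I" using wI .
  next
    fix x assume xS: "x \<in> ?S" and xI: "x \<notin> ?I"
    obtain \<pi> lp where x: "x = (\<pi>, lp)" by (cases x)
    have piS: "\<pi> \<in> gridded_class m n M C" "length lp = glen \<pi>" "set lp \<subseteq> A"
      using xS x unfolding labelled_set_def by auto
    then have "m_divisible m n M c r \<pi>" using xI x unfolding labelled_set_def by auto
    then obtain \<sigma> \<tau> where st: "glen \<sigma> > 0" "glen \<tau> > 0" "msum m n M c r \<sigma> \<tau> \<pi>"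
      unfolding m_divisible_def by blast
    then obtain f g where G: "is_gridded m n M \<sigma>" "is_gridded m n M \<tau>" "is_gridded m n M \<pi>" "msw m n c r \<sigma> \<tau> \<pi> f g"
      unfolding msum_iff by blast
    have sz: "glen \<sigma> + glen \<tau> = glen \<pi>" using msw_size[OF G(4)] .
    have sC: "\<sigma> \<in> gridded_class m n M C" using comp_in_class[OF pc piS(1) G(1) msw_parts(1)[OF G(4)]] .
    have tC: "\<tau> \<in> gridded_class m n M C" using comp_in_class[OF pc piS(1) G(2) msw_parts(2)[OF G(4)]] .
    define ls where "ls = map (\<lambda>a. lp ! (f a)) [0..<glen \<sigma>]"
    define lt where "lt = map (\<lambda>b. lp ! (g b)) [0..<glen \<tau>]"
    have fl: "lp ! (f a) \<in> A" if "a < glen \<sigma>" for a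
      using gemb_lt[OF msw_parts(1)[OF G(4)] that] piS(2,3) nth_mem by (metis subsetD)
    have gl: "lp ! (g b) \<in> A" if "b < glen \<tau>" for b
      using gemb_lt[OF msw_parts(2)[OF G(4)] that] piS(2,3) nth_mem by (metis subsetD)
    have S1: "(\<sigma>, ls) \<in> ?S" using sC fl unfolding labelled_set_def ls_def by auto
    have S2: "(\<tau>, lt) \<in> ?S" using tC gl unfolding labelled_set_def lt_def by auto
    have L: "lsm m n M c r (\<sigma>, ls) (\<tau>, lt) x"
      unfolding lsm_def x using G by (intro exI[of _ f] exI[of _ g]) (simp add: ls_def lt_def)
    show "\<exists>a b. a \<in> ?S \<and> b \<in> ?S \<and> glen (fst a) < glen (fst x) \<and> glen (fst b) < glen (fst x)
      \<and> lsm m n M c r a b x"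
      using S1 S2 L sz st x by (intro exI[of _ "(\<sigma>, ls)"] exI[of _ "(\<tau>, lt)"]) simp
  next
    fix a b x assume abx: "a \<in> ?S" "b \<in> ?S" "x \<in> ?S" "lsm m n M c r a b x"
    then obtain f g where w: "msw m n c r (fst a) (fst b) (fst x) f g"
      "\<forall>i<glen (fst a). snd a ! i = snd x ! (f i)" "\<forall>i<glen (fst b). snd b ! i = snd x ! (g i)"
      unfolding lsm_def by blast
    have "\<forall>i<glen (fst a). le (snd a ! i) (snd x ! (f i))"
      using w(2) lab[OF abx(3)] gemb_lt[OF msw_parts(1)[OF w(1)]] rA by simp
    moreover have "\<forall>i<glen (fst b). le (snd b ! i) (snd x ! (g i))"
      using w(3) lab[OF abx(3)] gemb_lt[OF msw_parts(2)[OF w(1)]] rA by simp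
    ultimately show "lcontained m n le a x \<and> lcontained m n le b x"
      unfolding lcontained_def using msw_parts(1,2)[OF w(1)] by blast
  next
    fix a b x a' b' x'
    assume s: "lsm m n M c r a b x" "lsm m n M c r a' b' x'" and l: "lcontained m n le a a'" "lcontained m n le b b'"
    obtain f g where w: "msw m n c r (fst a) (fst b) (fst x) f g"
      "\<forall>i<glen (fst a). snd a ! i = snd x ! (f i)" "\<forall>i<glen (fst b). snd b ! i = snd x ! (g i)"
      and ga: "is_gridded m n M (fst a)" "is_gridded m n M (fst b)" "is_gridded m n M (fst x)"
      using s(1) unfolding lsm_def by blast
    obtain f' g' where w': "msw m n c r (fst a') (fst b') (fst x') f' g'"
      "\<forall>i<glen (fst a'). snd a' ! i = snd x' ! (f' i)" "\<forall>i<glen (fst b'). snd b' ! i = snd x' ! (g' i)"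
      and ga': "is_gridded m n M (fst a')" "is_gridded m n M (fst b')" "is_gridded m n M (fst x')"
      using s(2) unfolding lsm_def by blast
    obtain h1 h2 where h: "gemb m n h1 (fst a) (fst a')" "gemb m n h2 (fst b) (fst b')"
      and hl: "\<forall>i<glen (fst a). le (snd a ! i) (snd a' ! (h1 i))" "\<forall>i<glen (fst b). le (snd b ! i) (snd b' ! (h2 i))"
      using l unfolding lcontained_def by blast
    obtain H where H: "gemb m n H (fst x) (fst x')" "\<forall>i<glen (fst a). H (f i) = f' (h1 i)"
      "\<forall>i<glen (fst b). H (g i) = g' (h2 i)"
      using msw_mono[OF ga ga' w(1) w'(1) h] by blast
    have "\<forall>u<glen (fst x). le (snd x ! u) (snd x' ! (H u))"
    proof (intro allI impI)
      fix u assume u: "u < glen (fst x)"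
      show "le (snd x ! u) (snd x' ! (H u))"
        using msw_cover[OF w(1) u]
      proof
        assume "\<exists>i<glen (fst a). u = f i"
        then obtain i where i: "i < glen (fst a)" "u = f i" by blast
        have hi: "h1 i < glen (fst a')" using gemb_lt[OF h(1) i(1)] .
        show ?thesis using i(2) w(2)[rule_format, OF i(1)] w'(2)[rule_format, OF hi]
          hl(1)[rule_format, OF i(1)] H(2)[rule_format, OF i(1)] by simp
      next
        assume "\<exists>i<glen (fst b). u = g i"
        then obtain i where i: "i < glen (fst b)" "u = g i" by blast
        have hi: "h2 i < glen (fst b')" using gemb_lt[OF h(2) i(1)] .
        show ?thesis using i(2) w(3)[rule_format, OF i(1)] w'(3)[rule_format, OF hi]
          hl(2)[rule_format, OF i(1)] H(3)[rule_format, OF i(1)] by simp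
      qed
    qed
    then show "lcontained m n le x x'" unfolding lcontained_def using H(1) by blast
  qed
qed


theorem lemma4p8:
  fixes m n :: nat and M :: "nat \<Rightarrow> nat \<Rightarrow> int" and c r :: "nat \<Rightarrow> int"
    and C :: "nat list set"
  assumes "partial_mult_matrix m n M c r"
    and "perm_class C"
    and "C \<subseteq> Grid m n M"
  shows "(lwqo TYPE('l) m n {g \<in> gridded_class m n M C. \<not> m_divisible m n M c r g}
            \<longleftrightarrow> lwqo TYPE('l) m n (gridded_class m n M C))
       \<and> (gwqo m n {g \<in> gridded_class m n M C. \<not> m_divisible m n M c r g}
            \<longleftrightarrow> gwqo m n (gridded_class m n M C))"
proof -
  let ?C = "gridded_class m n M C"
  let ?I = "{g \<in> gridded_class m n M C. \<not> m_divisible m n M c r g}"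
  have sub: "?I \<subseteq> ?C" by blast
  have L: "lwqo TYPE('l) m n ?I \<longleftrightarrow> lwqo TYPE('l) m n ?C"
  proof
    assume a: "lwqo TYPE('l) m n ?I"
    show "lwqo TYPE('l) m n ?C" unfolding lwqo_def
    proof (intro allI impI)
      fix A :: "'l set" and le :: "'l \<Rightarrow> 'l \<Rightarrow> bool" assume wA: "wqo_on le A"
      have "wqo_on (lcontained m n le) (labelled_set ?I A)"
        using a[unfolded lwqo_def, rule_format, OF wA] .
      then show "wqo_on (lcontained m n le) (labelled_set ?C A)" by (rule lwqo_part[OF assms(2) wA])
    qed
  next
    assume a: "lwqo TYPE('l) m n ?C"
    show "lwqo TYPE('l) m n ?I" unfolding lwqo_def
    proof (intro allI impI)
      fix A :: "'l set" and le :: "'l \<Rightarrow> 'l \<Rightarrow> bool" assume wA: "wqo_on le A"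
      have "wqo_on (lcontained m n le) (labelled_set ?C A)"
        using a[unfolded lwqo_def, rule_format, OF wA] .
      moreover have "labelled_set ?I A \<subseteq> labelled_set ?C A" unfolding labelled_set_def by blast
      ultimately show "wqo_on (lcontained m n le) (labelled_set ?I A)" by (rule wqo_on_subset)
    qed
  qed
  have G: "gwqo m n ?I \<longleftrightarrow> gwqo m n ?C"
  proof
    assume "gwqo m n ?I"
    then show "gwqo m n ?C" by (rule gwqo_part[OF assms(2)])
  next
    assume "gwqo m n ?C"
    then show "gwqo m n ?I" unfolding gwqo_def using sub by (rule wqo_on_subset)
  qed
  show ?thesis using L G by (rule conjI)
qed


end
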